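(* For an $N\times N$ stochastic matrix $A$, one has $\tau_t(A)\to 1$ as $t\to\infty$ if and only if $A$ is irreducible, aperiodic, and bistochastic.
   Context: Let $X$ be a square-integrable real random variable with $\mathbb E X=\theta$ and $\mathrm{Var}(X)=\sigma^2>0$. Fix an integer $N\geq 2$. For $i\in\{1,\dots,N\}$ and $t\geq 1$ let $X_t^{(i)}$ be random variables distributed as $X$, mutually independent over both $i$ and $t$, and write $\mathbf X_t=(X_t^{(1)},\dots,X_t^{(N)})^\top$. Let $A=(a_{ij})_{1\le i,j\le N}$ be a stochastic matrix ($a_{ij}\geq 0$ and every row sums to $1$). Define $\hat{\boldsymbol\theta}_1=\mathbf X_1$ and $\hat{\boldsymbol\theta}_{t+1}=\frac{t}{t+1}A\hat{\boldsymbol\theta}_t+\frac{1}{t+1}\mathbf X_{t+1}$ for $t\geq 1$. Let $\bar{\mathbb X}_{Nt}=\frac{1}{Nt}\sum_{i=1}^N\sum_{k=1}^t X_k^{(i)}$, $\mathbf 1=(1,\dots,1)^\top$, and let $\|\cdot\|$ denote the Euclidean norm. The performance ratio is $\tau_t(A)=\dfrac{\mathbb E\|(\bar{\mathbb X}_{Nt}-\theta)\mathbf 1\|^2}{\mathbb E\|\hat{\boldsymbol\theta}_t-\theta\mathbf 1\|^2}$, $t\geq 1$. $A$ is irreducible if for every $(i,j)$ there is $k\geq 0$ with $(A^k)_{ij}\neq 0$; for irreducible $A$, its period is the gcd of all $k\geq1$ with $(A^k)_{ii}>0$ (independent of $i$), and $A$ is aperiodic if this period is $1$. $A$ is bistochastic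 if moreover every column sums to $1$. *)

theory Defs
  imports "HOL-Probability.Probability"
begin

text \<open>Matrices are \<open>real^'n^'n\<close>; the index type \<open>'n\<close> plays the role of \<open>{1..N}\<close>.\<close>

primrec mpow :: "real^'n^'n \<Rightarrow> nat \<Rightarrow> real^'n^'n" where
  "mpow A 0 = mat 1"
| "mpow A (Suc k) = A ** mpow A k"

definition stochastic :: "real^'n^'n \<Rightarrow> bool" where
  "stochastic A \<longleftrightarrow> (\<forall>i j. A $ i $ j \<ge> 0) \<and> (\<forall>i. (\<Sum>j\<in>UNIV. A $ i $ j) = 1)"

definition bistochastic :: "real^'n^'n \<Rightarrow> bool" where
  "bistochastic A \<longleftrightarrow> stochastic A \<and> (\<forall>j. (\<Sum>i\<in>UNIV. A $ i $ j) = 1)"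

definition irreducible_mat :: "real^'n^'n \<Rightarrow> bool" where
  "irreducible_mat A \<longleftrightarrow> (\<forall>i j. \<exists>k. mpow A k $ i $ j \<noteq> 0)"

text \<open>Period of an irreducible matrix, computed at index \<open>i\<close> (independent of \<open>i\<close>).\<close>
definition period_at :: "real^'n^'n \<Rightarrow> 'n \<Rightarrow> nat" where
  "period_at A i = Gcd {k. k \<ge> 1 \<and> mpow A k $ i $ i > 0}"

definition aperiodic_mat :: "real^'n^'n \<Rightarrow> bool" where
  "aperiodic_mat A \<longleftrightarrow> (\<forall>i. period_at A i = 1)"

text \<open>Observations: \<open>X i t \<omega>\<close> is \<open>X_t^{(i)}(\<omega>)\<close>, meaningful for \<open>t \<ge> 1\<close>.\<close>
definition obs_vec :: "('n \<Rightarrow> nat \<Rightarrow> 'a \<Rightarrow> real) \<Rightarrow> nat \<Rightarrow> 'a \<Rightarrow> real^'n" where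
  "obs_vec X t \<omega> = (\<chi> i. X i t \<omega>)"

text \<open>\<open>theta_hat A X t\<close> for \<open>t \<ge> 1\<close>; the value at \<open>t = 0\<close> is irrelevant.\<close>
fun theta_hat :: "real^'n^'n \<Rightarrow> ('n \<Rightarrow> nat \<Rightarrow> 'a \<Rightarrow> real) \<Rightarrow> nat \<Rightarrow> 'a \<Rightarrow> real^'n" where
  "theta_hat A X 0 \<omega> = 0"
| "theta_hat A X (Suc 0) \<omega> = obs_vec X 1 \<omega>"
| "theta_hat A X (Suc (Suc t)) \<omega> =
     (real (Suc t) / real (Suc (Suc t))) *\<^sub>R (A *v theta_hat A X (Suc t) \<omega>)
     + (1 / real (Suc (Suc t))) *\<^sub>R obs_vec X (Suc (Suc t)) \<omega>"

definition grand_mean :: "('n::finite \<Rightarrow> nat \<Rightarrow> 'a \<Rightarrow> real) \<Rightarrow> nat \<Rightarrow> 'a \<Rightarrow> real" where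
  "grand_mean X t \<omega> = (\<Sum>i\<in>UNIV. \<Sum>k=1..t. X i k \<omega>) / (real CARD('n) * real t)"

definition perf_ratio ::
  "'a measure \<Rightarrow> real^'n^'n \<Rightarrow> ('n \<Rightarrow> nat \<Rightarrow> 'a \<Rightarrow> real) \<Rightarrow> real \<Rightarrow> nat \<Rightarrow> real" where
  "perf_ratio M A X \<theta> t =
     (\<integral>\<omega>. (norm ((grand_mean X t \<omega> - \<theta>) *\<^sub>R (1::real^'n)))\<^sup>2 \<partial>M)
     / (\<integral>\<omega>. (norm (theta_hat A X t \<omega> - \<theta> *\<^sub>R (1::real^'n)))\<^sup>2 \<partial>M)"

end

theory Submission
  imports Defs
begin


lemma (in prob_space) indep_pair:
  fixes Y :: "'i \<Rightarrow> 'a \<Rightarrow> real"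
  assumes ind: "indep_vars (\<lambda>_. borel) Y I" and "p \<in> I" "q \<in> I" "p \<noteq> q"
  shows "indep_var borel (Y p) borel (Y q)"
proof -
  have "indep_var (PiM {p} (\<lambda>_. borel)) (\<lambda>\<omega>. restrict (\<lambda>i. Y i \<omega>) {p})
                  (PiM {q} (\<lambda>_. borel)) (\<lambda>\<omega>. restrict (\<lambda>i. Y i \<omega>) {q})"
    using assms by (intro indep_var_restrict[OF ind]) auto
  then have "indep_var borel ((\<lambda>f. f p) \<circ> (\<lambda>\<omega>. restrict (\<lambda>i. Y i \<omega>) {p}))
                  borel ((\<lambda>f. f q) \<circ> (\<lambda>\<omega>. restrict (\<lambda>i. Y i \<omega>) {q}))"
    by (rule indep_var_compose) (auto intro!: measurable_component_singleton)
  moreover have "((\<lambda>f. f p) \<circ> (\<lambda>\<omega>. restrict (\<lambda>i. Y i \<omega>) {p})) = Y p"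
     "((\<lambda>f. f q) \<circ> (\<lambda>\<omega>. restrict (\<lambda>i. Y i \<omega>) {q})) = Y q" by auto
  ultimately show ?thesis by simp
qed

lemma moments:
  fixes M :: "'a measure" and X :: "'n \<Rightarrow> nat \<Rightarrow> 'a \<Rightarrow> real" and D :: "real measure"
  assumes P: "prob_space M"
    and meas: "\<And>i t. t \<ge> 1 \<Longrightarrow> X i t \<in> borel_measurable M"
    and ind: "prob_space.indep_vars M (\<lambda>_. borel) (\<lambda>(i, t). X i t) (UNIV \<times> {1..})"
    and dis: "\<And>i t. t \<ge> 1 \<Longrightarrow> distr M borel (X i t) = D"
    and sq: "integrable D (\<lambda>x. x\<^sup>2)"
    and th: "\<theta> = (\<integral>x. x \<partial>D)"
    and s2: "\<sigma>2 = (\<integral>x. (x - \<theta>)\<^sup>2 \<partial>D)"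
  defines "Y \<equiv> (\<lambda>(i,t) \<omega>. X i t \<omega> - \<theta>)"
  shows "\<And>p q. p \<in> UNIV \<times> {1..} \<Longrightarrow> q \<in> UNIV \<times> {1..} \<Longrightarrow> integrable M (\<lambda>\<omega>. Y p \<omega> * Y q \<omega>)"
    and "\<And>p. p \<in> UNIV \<times> {1..} \<Longrightarrow> (\<integral>\<omega>. Y p \<omega> * Y p \<omega> \<partial>M) = \<sigma>2"
    and "\<And>p q. p \<in> UNIV \<times> {1..} \<Longrightarrow> q \<in> UNIV \<times> {1..} \<Longrightarrow> p \<noteq> q \<Longrightarrow> (\<integral>\<omega>. Y p \<omega> * Y q \<omega> \<partial>M) = 0"
proof -
  interpret prob_space M by fact
  have pD: "prob_space D" using prob_space_distr[OF meas[of 1]] dis[of 1] by simp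
  interpret D: prob_space D by fact
  have intD: "integrable D (\<lambda>x. x)"
  proof (rule D.square_integrable_imp_integrable)
    have "sets D = sets borel" using dis[of 1] by (metis order_refl sets_distr)
    then show "(\<lambda>x. x) \<in> borel_measurable D" by (rule measurable_ident_sets)
  qed (use sq in auto)
  have intD2: "integrable D (\<lambda>x. (x - \<theta>)\<^sup>2)"
    using sq intD by (simp add: power2_eq_square algebra_simps)
  have Ymeas: "Y p \<in> borel_measurable M" if "p \<in> UNIV \<times> {1..}" for p
    using that meas by (auto simp: Y_def split: prod.splits)
  have Yint2: "integrable M (\<lambda>\<omega>. Y p \<omega> * Y p \<omega>)" and Yvar: "(\<integral>\<omega>. Y p \<omega> * Y p \<omega> \<partial>M) = \<sigma>2"
     and Yint: "integrable M (Y p)" and Ymean: "(\<integral>\<omega>. Y p \<omega> \<partial>M) = 0"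
    if hp: "p \<in> UNIV \<times> {1..}" for p
  proof -
    obtain i t where p: "p = (i,t)" and t: "t \<ge> 1" using hp by (cases p) auto
    have m: "X i t \<in> measurable M borel" using meas t by simp
    have "integrable (distr M borel (X i t)) (\<lambda>x. (x - \<theta>)\<^sup>2)" using intD2 dis[OF t] by simp
    then have "integrable M (\<lambda>\<omega>. (X i t \<omega> - \<theta>)\<^sup>2)" by (subst (asm) integrable_distr_eq[OF m]) auto
    then show "integrable M (\<lambda>\<omega>. Y p \<omega> * Y p \<omega>)" by (simp add: p Y_def power2_eq_square)
    have "(\<integral>x. (x - \<theta>)\<^sup>2 \<partial>distr M borel (X i t)) = \<sigma>2" using s2 dis[OF t] by simp
    then have "(\<integral>\<omega>. (X i t \<omega> - \<theta>)\<^sup>2 \<partial>M) = \<sigma>2" by (subst (asm) integral_distr[OF m]) auto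
    then show "(\<integral>\<omega>. Y p \<omega> * Y p \<omega> \<partial>M) = \<sigma>2" by (simp add: p Y_def power2_eq_square)
    have "integrable (distr M borel (X i t)) (\<lambda>x. x)" using intD dis[OF t] by simp
    then have iX: "integrable M (X i t)" by (subst (asm) integrable_distr_eq[OF m]) auto
    then show "integrable M (Y p)" by (simp add: p Y_def)
    have "(\<integral>x. x \<partial>distr M borel (X i t)) = \<theta>" using th dis[OF t] by simp
    then have "(\<integral>\<omega>. X i t \<omega> \<partial>M) = \<theta>" by (subst (asm) integral_distr[OF m]) auto
    then show "(\<integral>\<omega>. Y p \<omega> \<partial>M) = 0" using iX by (simp add: p Y_def prob_space)
  qed
  have indY: "indep_vars (\<lambda>_. borel) Y (UNIV \<times> {1..})"
  proof -
    have "indep_vars (\<lambda>_. borel) (\<lambda>p \<omega>. (\<lambda>x. x - \<theta>) ((\<lambda>(i, t). X i t) p \<omega>)) (UNIV \<times> {1..})"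
      by (rule indep_vars_compose2[OF ind]) auto
    moreover have "(\<lambda>p \<omega>. (\<lambda>x. x - \<theta>) ((\<lambda>(i, t). X i t) p \<omega>)) = Y"
      by (auto simp: Y_def fun_eq_iff)
    ultimately show ?thesis by simp
  qed
  show "integrable M (\<lambda>\<omega>. Y p \<omega> * Y q \<omega>)" if "p \<in> UNIV \<times> {1..}" "q \<in> UNIV \<times> {1..}" for p q
  proof (cases "p = q")
    case True then show ?thesis using Yint2 that by simp
  next
    case False
    show ?thesis by (rule indep_var_integrable[OF indep_pair[OF indY that False] Yint Yint]) (use that in auto)
  qed
  show "(\<integral>\<omega>. Y p \<omega> * Y p \<omega> \<partial>M) = \<sigma>2" if "p \<in> UNIV \<times> {1..}" for p using Yvar that by blast
  show "(\<integral>\<omega>. Y p \<omega> * Y q \<omega> \<partial>M) = 0" if "p \<in> UNIV \<times> {1..}" "q \<in> UNIV \<times> {1..}" "p \<noteq> q" for p q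
    using indep_var_lebesgue_integral[OF indep_pair[OF indY that] Yint Yint] that Ymean by simp
qed



lemma stoch_one: "stochastic A \<Longrightarrow> A *v (1::real^'n) = 1"
  by (simp add: stochastic_def vec_eq_iff matrix_vector_mult_def)

lemma mv_sum: "(A::real^'n^'m) *v sum f S = (\<Sum>x\<in>S. A *v f x)"
  by (induction S rule: infinite_finite_induct) (auto simp: matrix_vector_right_distrib)

lemma decomp:
  fixes A :: "real^'n^'n" and X :: "'n \<Rightarrow> nat \<Rightarrow> 'a \<Rightarrow> real"
  assumes "stochastic A"
  shows "real (Suc t) *\<^sub>R (theta_hat A X (Suc t) \<omega> - \<theta> *\<^sub>R 1) =
    (\<Sum>k<Suc t. mpow A (t - k) *v (obs_vec X (Suc k) \<omega> - \<theta> *\<^sub>R 1))"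
proof (induction t)
  case 0
  then show ?case by simp
next
  case (Suc t)
  let ?Y = "\<lambda>k. obs_vec X (Suc k) \<omega> - \<theta> *\<^sub>R (1::real^'n)"
  have A1: "A *v (\<theta> *\<^sub>R (1::real^'n)) = \<theta> *\<^sub>R 1"
    using stoch_one[OF assms] by (simp add: matrix_vector_mult_scaleR)
  have "real (Suc (Suc t)) *\<^sub>R (theta_hat A X (Suc (Suc t)) \<omega> - \<theta> *\<^sub>R 1)
      = real (Suc t) *\<^sub>R (A *v theta_hat A X (Suc t) \<omega>) + obs_vec X (Suc (Suc t)) \<omega>
          - real (Suc (Suc t)) *\<^sub>R (\<theta> *\<^sub>R 1)"
    by (simp add: scaleR_right_diff_distrib scaleR_add_right del: of_nat_Suc)
  also have "\<dots> = A *v (real (Suc t) *\<^sub>R (theta_hat A X (Suc t) \<omega> - \<theta> *\<^sub>R 1)) + ?Y (Suc t)"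
    using stoch_one[OF assms] by (simp add: matrix_vector_mult_scaleR algebra_simps) (simp add: vec_eq_iff)
  also have "\<dots> = A *v (\<Sum>k<Suc t. mpow A (t - k) *v ?Y k) + ?Y (Suc t)"
    by (simp only: Suc.IH)
  also have "\<dots> = (\<Sum>k<Suc t. mpow A (Suc t - k) *v ?Y k) + ?Y (Suc t)"
    by (subst mv_sum) (auto simp: matrix_vector_mul_assoc Suc_diff_le simp del: sum.lessThan_Suc intro!: sum.cong)
  also have "\<dots> = (\<Sum>k<Suc (Suc t). mpow A (Suc t - k) *v ?Y k)"
    by simp
  finally show ?case .
qed



lemma (in prob_space) second_moment_sum:
  fixes Y :: "'i \<Rightarrow> 'a \<Rightarrow> real"
  assumes fin: "finite J"
    and int2: "\<And>p q. integrable M (\<lambda>\<omega>. Y p \<omega> * Y q \<omega>)"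
    and var: "\<And>p. (\<integral>\<omega>. Y p \<omega> * Y p \<omega> \<partial>M) = s"
    and cov: "\<And>p q. p \<noteq> q \<Longrightarrow> (\<integral>\<omega>. Y p \<omega> * Y q \<omega> \<partial>M) = 0"
  shows "(\<integral>\<omega>. (\<Sum>p\<in>J. c p * Y p \<omega>)\<^sup>2 \<partial>M) = s * (\<Sum>p\<in>J. (c p)\<^sup>2)"
    and "integrable M (\<lambda>\<omega>. (\<Sum>p\<in>J. c p * Y p \<omega>)\<^sup>2)"
proof -
  have eq: "(\<lambda>\<omega>. (\<Sum>p\<in>J. c p * Y p \<omega>)\<^sup>2) = (\<lambda>\<omega>. \<Sum>p\<in>J. \<Sum>q\<in>J. c p * c q * (Y p \<omega> * Y q \<omega>))"
    by (auto simp: power2_eq_square sum_product intro!: ext sum.cong)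
  then show "integrable M (\<lambda>\<omega>. (\<Sum>p\<in>J. c p * Y p \<omega>)\<^sup>2)"
    using int2 by (simp add: integrable_sum)
  have "(\<integral>\<omega>. (\<Sum>p\<in>J. c p * Y p \<omega>)\<^sup>2 \<partial>M) = (\<Sum>p\<in>J. \<Sum>q\<in>J. c p * c q * (\<integral>\<omega>. Y p \<omega> * Y q \<omega> \<partial>M))"
    using int2 eq by (simp add: integral_sum integrable_sum)
  also have "\<dots> = (\<Sum>p\<in>J. \<Sum>q\<in>J. if q = p then s * (c p)\<^sup>2 else 0)"
    using var cov by (intro sum.cong refl) (auto simp: power2_eq_square)
  also have "\<dots> = s * (\<Sum>p\<in>J. (c p)\<^sup>2)"
    using fin by (simp add: sum_distrib_left)
  finally show "(\<integral>\<omega>. (\<Sum>p\<in>J. c p * Y p \<omega>)\<^sup>2 \<partial>M) = s * (\<Sum>p\<in>J. (c p)\<^sup>2)" .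
qed

lemma sum_prod_split: "(\<Sum>p\<in>A\<times>B. f p) = (\<Sum>a\<in>A. \<Sum>b\<in>B. f (a,b))"
  by (simp add: sum.cartesian_product)

definition Fr :: "real^'n^'n \<Rightarrow> real" where
  "Fr B = (\<Sum>i\<in>UNIV. \<Sum>l\<in>UNIV. (B $ i $ l)\<^sup>2)"

lemma norm2_vec: "(norm (v::real^'n))\<^sup>2 = (\<Sum>i\<in>UNIV. (v $ i)\<^sup>2)"
  unfolding power2_norm_eq_inner inner_vec_def by (simp add: power2_eq_square)

lemma (in prob_space) expect_theta:
  fixes Z :: "'n::finite \<times> nat \<Rightarrow> 'a \<Rightarrow> real" and A :: "real^'n^'n" and X :: "'n \<Rightarrow> nat \<Rightarrow> 'a \<Rightarrow> real"
  assumes int2: "\<And>p q. integrable M (\<lambda>\<omega>. Z p \<omega> * Z q \<omega>)"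
    and var: "\<And>p. (\<integral>\<omega>. Z p \<omega> * Z p \<omega> \<partial>M) = s"
    and cov: "\<And>p q. p \<noteq> q \<Longrightarrow> (\<integral>\<omega>. Z p \<omega> * Z q \<omega> \<partial>M) = 0"
    and Zdef: "\<And>j k \<omega>. Z (j,k) \<omega> = X j (Suc k) \<omega> - \<theta>"
    and st: "stochastic A"
  shows "(\<integral>\<omega>. (norm (theta_hat A X (Suc t) \<omega> - \<theta> *\<^sub>R 1))\<^sup>2 \<partial>M)
          = s / (real (Suc t))\<^sup>2 * (\<Sum>k<Suc t. Fr (mpow A k))"
proof -
  define c where "c i = (\<lambda>(j,k). mpow A (t - k) $ i $ j / real (Suc t))" for i
  let ?J = "(UNIV :: 'n set) \<times> {..<Suc t}"
  have comp: "(theta_hat A X (Suc t) \<omega> - \<theta> *\<^sub>R 1) $ i = (\<Sum>p\<in>?J. c i p * Z p \<omega>)" for i \<omega>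
  proof -
    have "theta_hat A X (Suc t) \<omega> - \<theta> *\<^sub>R 1 = inverse (real (Suc t)) *\<^sub>R
        (\<Sum>k<Suc t. mpow A (t - k) *v (obs_vec X (Suc k) \<omega> - \<theta> *\<^sub>R 1))"
      unfolding decomp[OF st, symmetric] by (simp del: of_nat_Suc)
    then have "(theta_hat A X (Suc t) \<omega> - \<theta> *\<^sub>R 1) $ i = inverse (real (Suc t)) *
        (\<Sum>k<Suc t. \<Sum>j\<in>UNIV. mpow A (t - k) $ i $ j * Z (j,k) \<omega>)"
      by (simp add: matrix_vector_mult_def obs_vec_def Zdef del: of_nat_Suc)
    also have "\<dots> = (\<Sum>k<Suc t. \<Sum>j\<in>UNIV. c i (j,k) * Z (j,k) \<omega>)"
      by (simp add: c_def sum_distrib_left divide_inverse ac_simps del: of_nat_Suc sum.lessThan_Suc)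
    also have "\<dots> = (\<Sum>j\<in>UNIV. \<Sum>k<Suc t. c i (j,k) * Z (j,k) \<omega>)"
      by (rule sum.swap)
    also have "\<dots> = (\<Sum>p\<in>?J. c i p * Z p \<omega>)"
      by (simp only: sum_prod_split)
    finally show ?thesis .
  qed
  have "(\<lambda>\<omega>. (norm (theta_hat A X (Suc t) \<omega> - \<theta> *\<^sub>R 1))\<^sup>2) = (\<lambda>\<omega>. \<Sum>i\<in>UNIV. (\<Sum>p\<in>?J. c i p * Z p \<omega>)\<^sup>2)"
    by (simp only: norm2_vec comp)
  then have "(\<integral>\<omega>. (norm (theta_hat A X (Suc t) \<omega> - \<theta> *\<^sub>R 1))\<^sup>2 \<partial>M)
      = (\<Sum>i\<in>UNIV. (\<integral>\<omega>. (\<Sum>p\<in>?J. c i p * Z p \<omega>)\<^sup>2 \<partial>M))"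
    using second_moment_sum(2)[of ?J Z, OF _ int2 var cov] by (simp add: integral_sum)
  also have "\<dots> = (\<Sum>i\<in>UNIV. s * (\<Sum>p\<in>?J. (c i p)\<^sup>2))"
    using second_moment_sum(1)[of ?J Z, OF _ int2 var cov] by simp
  also have "\<dots> = s / (real (Suc t))\<^sup>2 * (\<Sum>i\<in>UNIV. \<Sum>j\<in>UNIV. \<Sum>k<Suc t. (mpow A (t - k) $ i $ j)\<^sup>2)"
  proof -
    have "(\<Sum>p\<in>?J. (c i p)\<^sup>2) = (\<Sum>j\<in>UNIV. \<Sum>k<Suc t. (mpow A (t - k) $ i $ j)\<^sup>2) / (real (Suc t))\<^sup>2" for i
      by (simp add: sum_prod_split c_def power_divide sum_divide_distrib del: of_nat_Suc sum.lessThan_Suc)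
    then show ?thesis by (simp add: sum_distrib_left sum_divide_distrib del: of_nat_Suc sum.lessThan_Suc)
  qed
  also have "(\<Sum>i\<in>UNIV. \<Sum>j\<in>UNIV. \<Sum>k<Suc t. (mpow A (t - k) $ i $ j)\<^sup>2)
      = (\<Sum>i\<in>UNIV. \<Sum>k<Suc t. \<Sum>j\<in>UNIV. (mpow A (t - k) $ i $ j)\<^sup>2)"
    by (rule sum.cong[OF refl], rule sum.swap)
  also have "\<dots> = (\<Sum>k<Suc t. \<Sum>i\<in>UNIV. \<Sum>j\<in>UNIV. (mpow A (t - k) $ i $ j)\<^sup>2)"
    by (rule sum.swap)
  also have "\<dots> = (\<Sum>k<Suc t. Fr (mpow A (t - k)))"
    by (simp add: Fr_def)
  also have "(\<Sum>k<Suc t. Fr (mpow A (t - k))) = (\<Sum>k<Suc t. Fr (mpow A k))"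
    using sum.nat_diff_reindex[of "\<lambda>k. Fr (mpow A k)" "Suc t"] by simp
  finally show ?thesis .
qed

lemma (in prob_space) expect_mean:
  fixes Z :: "'n::finite \<times> nat \<Rightarrow> 'a \<Rightarrow> real" and X :: "'n \<Rightarrow> nat \<Rightarrow> 'a \<Rightarrow> real"
  assumes int2: "\<And>p q. integrable M (\<lambda>\<omega>. Z p \<omega> * Z q \<omega>)"
    and var: "\<And>p. (\<integral>\<omega>. Z p \<omega> * Z p \<omega> \<partial>M) = s"
    and cov: "\<And>p q. p \<noteq> q \<Longrightarrow> (\<integral>\<omega>. Z p \<omega> * Z q \<omega> \<partial>M) = 0"
    and Zdef: "\<And>j k \<omega>. Z (j,k) \<omega> = X j (Suc k) \<omega> - \<theta>"
  shows "(\<integral>\<omega>. (norm ((grand_mean X (Suc t) \<omega> - \<theta>) *\<^sub>R (1::real^'n)))\<^sup>2 \<partial>M) = s / real (Suc t)"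
proof -
  let ?J = "(UNIV :: 'n set) \<times> {..<Suc t}"
  let ?N = "real CARD('n)"
  have Npos: "?N > 0" by simp
  have n1: "(norm (1::real^'n))\<^sup>2 = ?N" by (simp add: norm2_vec)
  have gm: "grand_mean X (Suc t) \<omega> - \<theta> = (\<Sum>p\<in>?J. (1 / (?N * real (Suc t))) * Z p \<omega>)" for \<omega>
  proof -
    have "(\<Sum>p\<in>?J. (1 / (?N * real (Suc t))) * Z p \<omega>)
        = (1 / (?N * real (Suc t))) * (\<Sum>j\<in>UNIV. \<Sum>k<Suc t. X j (Suc k) \<omega> - \<theta>)"
      by (simp only: sum_prod_split Zdef sum_distrib_left)
    also have "\<dots> = (1 / (?N * real (Suc t))) * ((\<Sum>j\<in>UNIV. \<Sum>k<Suc t. X j (Suc k) \<omega>) - ?N * real (Suc t) * \<theta>)"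
      by (simp add: sum_subtractf del: of_nat_Suc)
    also have "\<dots> = grand_mean X (Suc t) \<omega> - \<theta>"
      using Npos by (simp add: grand_mean_def sum.atLeast1_atMost_eq field_simps del: of_nat_Suc)
    finally show ?thesis by simp
  qed
  have "(\<lambda>\<omega>. (norm ((grand_mean X (Suc t) \<omega> - \<theta>) *\<^sub>R (1::real^'n)))\<^sup>2)
       = (\<lambda>\<omega>. ?N * (\<Sum>p\<in>?J. (1 / (?N * real (Suc t))) * Z p \<omega>)\<^sup>2)"
    by (simp add: power_mult_distrib n1 gm mult.commute del: of_nat_Suc)
  then have "(\<integral>\<omega>. (norm ((grand_mean X (Suc t) \<omega> - \<theta>) *\<^sub>R (1::real^'n)))\<^sup>2 \<partial>M)
       = ?N * (s * (\<Sum>p\<in>?J. (1 / (?N * real (Suc t)))\<^sup>2))"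
    using second_moment_sum(1)[of ?J Z s "\<lambda>_. 1 / (?N * real (Suc t))", OF _ int2 var cov]
    by (simp only: integral_mult_right_zero finite_SigmaI finite finite_lessThan simp_thms)
  also have "\<dots> = s / real (Suc t)"
  proof -
    have cJ: "real (card ?J) = ?N * real (Suc t)" by (simp add: card_cartesian_product algebra_simps)
    have "?N * (s * (\<Sum>p\<in>?J. (1 / (?N * real (Suc t)))\<^sup>2)) = ?N * (s * (?N * real (Suc t) * (1 / (?N * real (Suc t)))\<^sup>2))"
      by (simp only: sum_constant cJ)
    also have "\<dots> = s / real (Suc t)" using Npos by (simp add: power2_eq_square field_simps del: of_nat_Suc)
    finally show ?thesis .
  qed
  finally show ?thesis .
qed



lemma mpow_add: "mpow A (m + n) = mpow A m ** mpow A n"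
  by (induction m) (auto simp: matrix_mul_assoc)

lemma mpow_Suc': "mpow A (Suc k) = mpow A k ** A"
  using mpow_add[of A k 1] by simp

lemma mm_entry: "((B::real^'n^'n) ** C) $ i $ j = (\<Sum>p\<in>UNIV. B $ i $ p * C $ p $ j)"
  by (simp add: matrix_matrix_mult_def)

lemma mat1_entry: "(mat 1 :: real^'n^'n) $ i $ j = (if i = j then 1 else 0)"
  by (simp add: mat_def)

lemma stochastic_mult:
  assumes "stochastic B" "stochastic C" shows "stochastic (B ** C)"
  unfolding stochastic_def
proof safe
  fix i j show "0 \<le> (B ** C) $ i $ j"
    using assms unfolding stochastic_def mm_entry by (auto intro!: sum_nonneg)
next
  fix i
  have "(\<Sum>j\<in>UNIV. (B ** C) $ i $ j) = (\<Sum>p\<in>UNIV. B $ i $ p * (\<Sum>j\<in>UNIV. C $ p $ j))"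
    unfolding mm_entry by (subst sum.swap) (simp add: sum_distrib_left)
  also have "\<dots> = 1" using assms by (simp add: stochastic_def)
  finally show "(\<Sum>j\<in>UNIV. (B ** C) $ i $ j) = 1" .
qed

lemma stochastic_mat1: "stochastic (mat 1 :: real^'n^'n)"
  by (simp add: stochastic_def mat1_entry)

lemma stochastic_mpow: "stochastic A \<Longrightarrow> stochastic (mpow A k)"
  by (induction k) (auto simp: stochastic_mat1 stochastic_mult)

lemma colsum_mult:
  assumes "\<forall>j. (\<Sum>i\<in>UNIV. B $ i $ j) = 1" "\<forall>j. (\<Sum>i\<in>UNIV. C $ i $ j) = 1"
  shows "(\<Sum>i\<in>UNIV. ((B::real^'n^'n) ** C) $ i $ j) = 1"
proof -
  have "(\<Sum>i\<in>UNIV. (B ** C) $ i $ j) = (\<Sum>p\<in>UNIV. (\<Sum>i\<in>UNIV. B $ i $ p) * C $ p $ j)"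
    unfolding mm_entry by (subst sum.swap) (simp add: sum_distrib_right)
  also have "\<dots> = 1" using assms by simp
  finally show ?thesis .
qed

lemma bistochastic_mpow: "bistochastic A \<Longrightarrow> bistochastic (mpow A k)"
proof (induction k)
  case 0 then show ?case by (simp add: bistochastic_def stochastic_mat1 mat1_entry)
next
  case (Suc k) then show ?case
    by (auto simp: bistochastic_def stochastic_mult colsum_mult)
qed

lemma stoch_nonneg: "stochastic B \<Longrightarrow> 0 \<le> B $ i $ j"
  by (simp add: stochastic_def)

lemma stoch_le1: assumes "stochastic B" shows "B $ i $ j \<le> 1"
proof -
  have "B $ i $ j \<le> (\<Sum>l\<in>UNIV. B $ i $ l)"
    using assms by (intro member_le_sum) (auto simp: stochastic_def)
  then show ?thesis using assms by (simp add: stochastic_def)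
qed

lemma wcs:
  fixes c w :: "'i \<Rightarrow> real"
  assumes "finite S" "\<And>p. p \<in> S \<Longrightarrow> c p \<ge> 0"
  shows "(\<Sum>p\<in>S. c p * w p)\<^sup>2 \<le> (\<Sum>p\<in>S. c p) * (\<Sum>p\<in>S. c p * (w p)\<^sup>2)"
proof -
  have "(\<Sum>p\<in>S. c p * w p)\<^sup>2 = (\<Sum>p\<in>S. \<Sum>q\<in>S. c p * c q * (w p * w q))"
    by (auto simp: power2_eq_square sum_product intro!: sum.cong)
  also have "\<dots> \<le> (\<Sum>p\<in>S. \<Sum>q\<in>S. c p * c q * (((w p)\<^sup>2 + (w q)\<^sup>2) / 2))"
  proof (intro sum_mono)
    fix p q assume "p \<in> S" "q \<in> S"
    then have "c p * c q \<ge> 0" using assms by simp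
    moreover have "w p * w q \<le> ((w p)\<^sup>2 + (w q)\<^sup>2) / 2"
      using sum_squares_bound[of "w p" "w q"] by (simp add: power2_eq_square)
    ultimately show "c p * c q * (w p * w q) \<le> c p * c q * (((w p)\<^sup>2 + (w q)\<^sup>2) / 2)"
      by (intro mult_left_mono)
  qed
  also have "\<dots> = (\<Sum>p\<in>S. \<Sum>q\<in>S. c p * c q * (w p)\<^sup>2) / 2 + (\<Sum>p\<in>S. \<Sum>q\<in>S. c p * c q * (w q)\<^sup>2) / 2"
    by (simp add: sum.distrib sum_divide_distrib ring_distribs add_divide_distrib)
  also have "(\<Sum>p\<in>S. \<Sum>q\<in>S. c p * c q * (w q)\<^sup>2) = (\<Sum>p\<in>S. \<Sum>q\<in>S. c p * c q * (w p)\<^sup>2)"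
    by (subst sum.swap) (simp add: mult.commute)
  also have "(\<Sum>p\<in>S. \<Sum>q\<in>S. c p * c q * (w p)\<^sup>2) = (\<Sum>p\<in>S. c p) * (\<Sum>p\<in>S. c p * (w p)\<^sup>2)"
  proof -
    have "(\<Sum>p\<in>S. c p) * (\<Sum>p\<in>S. c p * (w p)\<^sup>2) = (\<Sum>p\<in>S. (\<Sum>q\<in>S. c q) * (c p * (w p)\<^sup>2))"
      by (rule sum_distrib_left)
    also have "\<dots> = (\<Sum>p\<in>S. \<Sum>q\<in>S. c p * c q * (w p)\<^sup>2)"
      by (intro sum.cong refl) (subst sum_distrib_right, simp add: ac_simps)
    finally show ?thesis by simp
  qed
  finally show ?thesis by simp
qed

lemma Fr_ge1:
  assumes "stochastic (B::real^'n^'n)" shows "Fr B \<ge> 1"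
proof -
  have row: "(\<Sum>l\<in>UNIV. (B $ i $ l)\<^sup>2) \<ge> 1 / real CARD('n)" for i
  proof -
    have "(\<Sum>l\<in>UNIV. 1 * B $ i $ l)\<^sup>2 \<le> (\<Sum>l\<in>(UNIV::'n set). 1) * (\<Sum>l\<in>UNIV. 1 * (B $ i $ l)\<^sup>2)"
      by (rule wcs) auto
    then have "1 \<le> real CARD('n) * (\<Sum>l\<in>UNIV. (B $ i $ l)\<^sup>2)"
      using assms by (simp add: stochastic_def)
    then show ?thesis by (simp add: field_simps)
  qed
  have "Fr B \<ge> (\<Sum>i\<in>(UNIV::'n set). 1 / real CARD('n))"
    unfolding Fr_def by (rule sum_mono) (rule row)
  then show ?thesis by simp
qed

definition Hd :: "real^'n^'n \<Rightarrow> real" where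
  "Hd B = (\<Sum>i\<in>UNIV. \<Sum>l\<in>UNIV. (B $ i $ l - 1 / real CARD('n))\<^sup>2)"

lemma Hd_eq: assumes "stochastic (B::real^'n^'n)" shows "Hd B = Fr B - 1"
proof -
  let ?N = "real CARD('n)"
  have "Hd B = (\<Sum>i\<in>UNIV. \<Sum>l\<in>UNIV. (B $ i $ l)\<^sup>2 - 2 / ?N * B $ i $ l + 1 / ?N\<^sup>2)"
    unfolding Hd_def by (intro sum.cong refl) (simp add: power2_eq_square field_simps)
  also have "\<dots> = (\<Sum>i\<in>UNIV. (\<Sum>l\<in>UNIV. (B $ i $ l)\<^sup>2) - 2 / ?N * (\<Sum>l\<in>UNIV. B $ i $ l) + ?N / ?N\<^sup>2)"
    by (simp add: sum.distrib sum_subtractf sum_distrib_left)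
  also have "\<dots> = (\<Sum>i\<in>UNIV. (\<Sum>l\<in>UNIV. (B $ i $ l)\<^sup>2) - 1 / ?N)"
    using assms by (intro sum.cong refl) (simp add: stochastic_def power2_eq_square field_simps)
  also have "\<dots> = Fr B - 1"
    by (simp add: Fr_def sum_subtractf)
  finally show ?thesis .
qed

lemma Hd_nonneg: "Hd B \<ge> 0"
  unfolding Hd_def by (intro sum_nonneg) auto



lemma numsemi:
  fixes S :: "nat set"
  assumes z: "0 \<in> S" and add: "\<And>a b. a \<in> S \<Longrightarrow> b \<in> S \<Longrightarrow> a + b \<in> S"
    and g: "Gcd {k. k \<ge> 1 \<and> k \<in> S} = 1"
  shows "\<exists>K. \<forall>n\<ge>K. n \<in> S"
proof -
  have mult: "k * s \<in> S" if "s \<in> S" for k s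
    by (induction k) (use z add that in auto)
  obtain s0 where s0: "s0 \<in> S" "s0 \<ge> 1"
  proof -
    have "{k. k \<ge> 1 \<and> k \<in> S} \<noteq> {}"
    proof
      assume e: "{k. k \<ge> 1 \<and> k \<in> S} = {}"
      have "Gcd {k. k \<ge> 1 \<and> k \<in> S} = 0" by (subst e) simp
      then show False using g by (metis zero_neq_one)
    qed
    then show ?thesis using that by auto
  qed
  define P where "P d \<longleftrightarrow> d > 0 \<and> (\<exists>y. y \<in> S \<and> y + d \<in> S)" for d
  have Ps0: "P s0" unfolding P_def using s0 z by (intro conjI exI[of _ 0]) auto
  define d where "d = (LEAST d. P d)"
  have Pd: "P d" unfolding d_def by (rule LeastI[of P, OF Ps0])
  then obtain y0 where y0: "y0 \<in> S" "y0 + d \<in> S" and dpos: "d > 0" unfolding P_def by auto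
  have dvd: "d dvd s" if "s \<in> S" for s
  proof (rule ccontr)
    assume nd: "\<not> d dvd s"
    define r where "r = s mod d"
    define q where "q = s div d"
    have r: "r > 0" "r < d" using nd dpos by (auto simp: r_def mod_greater_zero_iff_not_dvd)
    have s: "s = q * d + r" by (simp add: q_def r_def)
    have "s + q * y0 \<in> S" using add[OF that mult[OF y0(1)]] .
    moreover have "q * (y0 + d) \<in> S" by (rule mult[OF y0(2)])
    moreover have "q * (y0 + d) + r = s + q * y0" using s by (simp add: algebra_simps)
    ultimately have "P r" unfolding P_def using r by metis
    then have "d \<le> r" unfolding d_def by (rule Least_le)
    then show False using r by simp
  qed
  have "d dvd Gcd {k. k \<ge> 1 \<and> k \<in> S}" by (rule Gcd_greatest) (use dvd in auto)
  then have d1: "d = 1" using g by simp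
  show ?thesis
  proof (cases "y0 = 0")
    case True
    then have "1 \<in> S" using y0 d1 by simp
    then show ?thesis using mult[of 1] by auto
  next
    case False
    show ?thesis
    proof (intro exI allI impI)
      fix n assume n: "y0 * y0 \<le> n"
      define q where "q = n div y0"
      define r where "r = n mod y0"
      have rq: "r < y0" using False by (simp add: r_def)
      have "y0 \<le> q" unfolding q_def using n False
        by (metis div_le_mono nonzero_mult_div_cancel_left)
      then obtain e where e: "q = r + e" using rq by (metis le_Suc_ex less_imp_le_nat order.trans)
      have "n = q * y0 + r" by (simp add: q_def r_def)
      also have "\<dots> = e * y0 + r * (y0 + 1)" by (simp add: e algebra_simps)
      finally have "n = e * y0 + r * (y0 + 1)" .
      moreover have "e * y0 + r * (y0 + 1) \<in> S"
        using add[OF mult[OF y0(1)] mult[OF y0(2)]] d1 by simp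
      ultimately show "n \<in> S" by simp
    qed
  qed
qed

lemma mpow_nonneg: "stochastic A \<Longrightarrow> 0 \<le> mpow A k $ i $ j"
  using stoch_nonneg[OF stochastic_mpow] by blast

lemma pos_comb:
  assumes st: "stochastic A" and a: "mpow A a $ i $ l > 0" and b: "mpow A b $ l $ j > 0"
  shows "mpow A (a + b) $ i $ j > 0"
proof -
  have "0 < mpow A a $ i $ l * mpow A b $ l $ j" using a b by simp
  also have "\<dots> \<le> (\<Sum>p\<in>UNIV. mpow A a $ i $ p * mpow A b $ p $ j)"
    by (rule member_le_sum[where f = "\<lambda>p. mpow A a $ i $ p * mpow A b $ p $ j"])
       (auto intro!: mult_nonneg_nonneg mpow_nonneg[OF st])
  finally show ?thesis by (simp add: mpow_add mm_entry)
qed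

lemma prim_pos:
  assumes st: "stochastic A" and irr: "irreducible_mat A" and ap: "aperiodic_mat A"
  shows "\<exists>m. \<forall>i j. mpow A m $ i $ j > 0"
proof -
  have "\<exists>K. \<forall>n\<ge>K. mpow A n $ i $ i > 0" for i
  proof -
    have "\<exists>K. \<forall>n\<ge>K. n \<in> {k. mpow A k $ i $ i > 0}"
    proof (rule numsemi)
      show "0 \<in> {k. 0 < mpow A k $ i $ i}" by (simp add: mat1_entry)
      show "a + b \<in> {k. 0 < mpow A k $ i $ i}" if "a \<in> {k. 0 < mpow A k $ i $ i}" "b \<in> {k. 0 < mpow A k $ i $ i}" for a b
        using pos_comb[OF st, of a i i b i] that by simp
      show "Gcd {k. 1 \<le> k \<and> k \<in> {k. 0 < mpow A k $ i $ i}} = 1"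
        using ap by (simp add: aperiodic_mat_def period_at_def)
    qed
    then show ?thesis by simp
  qed
  then obtain K where K: "\<And>i n. n \<ge> K i \<Longrightarrow> mpow A n $ i $ i > 0" by metis
  have "\<exists>d. mpow A d $ i $ j > 0" for i j
  proof -
    obtain d where "mpow A d $ i $ j \<noteq> 0" using irr by (auto simp: irreducible_mat_def)
    then show ?thesis using mpow_nonneg[OF st, of d i j] by (intro exI[of _ d]) simp
  qed
  then obtain d where d: "\<And>i j. mpow A (d i j) $ i $ j > 0" by metis
  define m where "m = (\<Sum>i\<in>UNIV. K i) + (\<Sum>i\<in>UNIV. \<Sum>j\<in>UNIV. d i j)"
  show ?thesis
  proof (intro exI allI)
    fix i j
    have "K i \<le> (\<Sum>i\<in>UNIV. K i)" by (rule member_le_sum) auto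
    moreover have "d i j \<le> (\<Sum>j\<in>UNIV. d i j)" by (rule member_le_sum) auto
    moreover have "(\<Sum>j\<in>UNIV. d i j) \<le> (\<Sum>i\<in>UNIV. \<Sum>j\<in>UNIV. d i j)"
      by (rule member_le_sum[where f = "\<lambda>i. \<Sum>j\<in>UNIV. d i j"]) auto
    ultimately have le: "K i \<le> m - d i j" "m = (m - d i j) + d i j" unfolding m_def by linarith+
    have "mpow A ((m - d i j) + d i j) $ i $ j > 0"
      by (rule pos_comb[OF st K[OF le(1)] d])
    then show "mpow A m $ i $ j > 0" using le(2) by simp
  qed
qed



lemma Hd_mult:
  fixes B C :: "real^'n^'n"
  assumes bB: "bistochastic B" and bC: "bistochastic C" and d0: "0 \<le> \<delta>" and dB: "\<And>i j. \<delta> \<le> B $ i $ j"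
  shows "Hd (B ** C) \<le> (1 - real CARD('n) * \<delta>)\<^sup>2 * Hd C"
proof -
  let ?N = "real CARD('n)"
  define r where "r = 1 - ?N * \<delta>"
  define c where "c i p = B $ i $ p - \<delta>" for i p
  have c0: "c i p \<ge> 0" for i p using dB by (simp add: c_def)
  have crow: "(\<Sum>p\<in>UNIV. c i p) = r" for i
    using bB by (simp add: c_def r_def sum_subtractf bistochastic_def stochastic_def)
  have ccol: "(\<Sum>i\<in>UNIV. c i p) = r" for p
    using bB by (simp add: c_def r_def sum_subtractf bistochastic_def)
  have r0: "r \<ge> 0" using crow[of undefined] c0 by (metis sum_nonneg)
  have col: "(\<Sum>i\<in>UNIV. ((B ** C) $ i $ l - 1 / ?N)\<^sup>2) \<le> r\<^sup>2 * (\<Sum>p\<in>UNIV. (C $ p $ l - 1 / ?N)\<^sup>2)" for l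
  proof -
    define w where "w p = C $ p $ l - 1 / ?N" for p
    have wsum: "(\<Sum>p\<in>UNIV. w p) = 0"
      using bC by (simp add: w_def sum_subtractf bistochastic_def)
    have e: "(B ** C) $ i $ l - 1 / ?N = (\<Sum>p\<in>UNIV. c i p * w p)" for i
    proof -
      have "(\<Sum>p\<in>UNIV. c i p * w p) = (\<Sum>p\<in>UNIV. B $ i $ p * w p) - \<delta> * (\<Sum>p\<in>UNIV. w p)"
        by (simp add: c_def algebra_simps sum_subtractf sum_distrib_left)
      also have "\<dots> = (\<Sum>p\<in>UNIV. B $ i $ p * C $ p $ l) - (\<Sum>p\<in>UNIV. B $ i $ p) / ?N"
        by (simp only: wsum mult_zero_right diff_zero) (simp add: w_def right_diff_distrib sum_subtractf sum_divide_distrib)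
      also have "\<dots> = (B ** C) $ i $ l - 1 / ?N"
        using bB by (simp add: mm_entry bistochastic_def stochastic_def)
      finally show ?thesis by simp
    qed
    have "(\<Sum>i\<in>UNIV. ((B ** C) $ i $ l - 1 / ?N)\<^sup>2) \<le> (\<Sum>i\<in>UNIV. r * (\<Sum>p\<in>UNIV. c i p * (w p)\<^sup>2))"
    proof (rule sum_mono)
      fix i
      show "((B ** C) $ i $ l - 1 / ?N)\<^sup>2 \<le> r * (\<Sum>p\<in>UNIV. c i p * (w p)\<^sup>2)"
        unfolding e crow[of i, symmetric] by (rule wcs) (auto simp: c0)
    qed
    also have "\<dots> = r * (\<Sum>p\<in>UNIV. (\<Sum>i\<in>UNIV. c i p) * (w p)\<^sup>2)"
    proof -
      have "(\<Sum>i\<in>UNIV. \<Sum>p\<in>UNIV. c i p * (w p)\<^sup>2) = (\<Sum>p\<in>UNIV. \<Sum>i\<in>UNIV. c i p * (w p)\<^sup>2)"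
        by (rule sum.swap)
      then show ?thesis by (simp add: sum_distrib_left[symmetric] sum_distrib_right)
    qed
    also have "\<dots> = r\<^sup>2 * (\<Sum>p\<in>UNIV. (w p)\<^sup>2)"
      by (simp add: ccol sum_distrib_left power2_eq_square mult.assoc)
    finally show ?thesis by (simp add: w_def)
  qed
  have "Hd (B ** C) = (\<Sum>l\<in>UNIV. \<Sum>i\<in>UNIV. ((B ** C) $ i $ l - 1 / ?N)\<^sup>2)"
    unfolding Hd_def by (rule sum.swap)
  also have "\<dots> \<le> (\<Sum>l\<in>UNIV. r\<^sup>2 * (\<Sum>p\<in>UNIV. (C $ p $ l - 1 / ?N)\<^sup>2))"
    by (rule sum_mono) (rule col)
  also have "\<dots> = r\<^sup>2 * Hd C"
    unfolding Hd_def sum_distrib_left[symmetric] by (subst (2) sum.swap) (rule refl)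
  finally show ?thesis by (simp add: r_def)
qed

lemma cesaro_nonneg:
  fixes G :: "nat \<Rightarrow> real"
  assumes G0: "\<And>k. G k \<ge> 0" and lim: "G \<longlonglongrightarrow> 0"
  shows "(\<lambda>t. (\<Sum>k<Suc t. G k) / real (Suc t)) \<longlonglongrightarrow> 0"
proof (rule LIMSEQ_I)
  fix e :: real assume e: "e > 0"
  obtain K where K: "\<And>k. k \<ge> K \<Longrightarrow> G k < e / 2"
    using LIMSEQ_D[OF lim, of "e/2"] e G0 by (metis abs_of_nonneg diff_zero half_gt_zero real_norm_def)
  define B where "B = (\<Sum>k<K. G k)"
  have B0: "B \<ge> 0" unfolding B_def by (intro sum_nonneg G0)
  obtain T where T: "real T > 2 * B / e" using reals_Archimedean2 by blast
  show "\<exists>no. \<forall>n\<ge>no. norm ((\<Sum>k<Suc n. G k) / real (Suc n) - 0) < e"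
  proof (intro exI allI impI)
    fix t assume t: "K + T \<le> t"
    have split: "(\<Sum>k<Suc t. G k) = B + (\<Sum>k\<in>{K..<Suc t}. G k)"
      unfolding B_def using sum.atLeastLessThan_concat[of 0 K "Suc t" G] t by (simp add: atLeast0LessThan)
    have "(\<Sum>k\<in>{K..<Suc t}. G k) \<le> (\<Sum>k\<in>{K..<Suc t}. e / 2)"
    proof (rule sum_mono)
      fix k assume "k \<in> {K..<Suc t}"
      then show "G k \<le> e / 2" using K[of k] by simp
    qed
    also have "\<dots> \<le> real (Suc t) * (e / 2)" using e by simp
    finally have s: "(\<Sum>k<Suc t. G k) \<le> B + real (Suc t) * (e / 2)" using split by simp
    have "B < real (Suc t) * (e / 2)"
    proof -
      have "2 * B / e < real (Suc t)" using T t by simp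
      then show ?thesis using e by (simp add: field_simps)
    qed
    with s have "(\<Sum>k<Suc t. G k) < real (Suc t) * e" by simp
    moreover have "(\<Sum>k<Suc t. G k) \<ge> 0" by (intro sum_nonneg G0)
    ultimately show "norm ((\<Sum>k<Suc t. G k) / real (Suc t) - 0) < e"
      by (simp add: field_simps del: of_nat_Suc)
  qed
qed



lemma Hd_tendsto0:
  fixes A :: "real^'n^'n"
  assumes bA: "bistochastic A" and irr: "irreducible_mat A" and ap: "aperiodic_mat A"
  shows "(\<lambda>k. Hd (mpow A k)) \<longlonglongrightarrow> 0"
proof -
  let ?N = "real CARD('n)"
  let ?H = "\<lambda>k. Hd (mpow A k)"
  have st: "stochastic A" using bA by (simp add: bistochastic_def)
  obtain m where pos: "\<And>i j. mpow A m $ i $ j > 0" using prim_pos[OF st irr ap] by blast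
  define E where "E = (\<lambda>(i,j). mpow A m $ i $ j) ` UNIV"
  define \<delta> where "\<delta> = Min E"
  have finE: "finite E" and neE: "E \<noteq> {}" by (auto simp: E_def)
  have dpos: "\<delta> > 0" unfolding \<delta>_def using finE neE pos by (subst Min_gr_iff) (auto simp: E_def)
  have dle: "\<delta> \<le> mpow A m $ i $ j" for i j unfolding \<delta>_def by (rule Min_le[OF finE]) (auto simp: E_def)
  have "?N * \<delta> \<le> (\<Sum>j\<in>UNIV. mpow A m $ i $ j)" for i
    using sum_mono[of UNIV "\<lambda>_. \<delta>" "\<lambda>j. mpow A m $ i $ j"] dle by simp
  then have Nd1: "?N * \<delta> \<le> 1" using stochastic_mpow[OF st, of m] by (simp add: stochastic_def)
  define q where "q = (1 - ?N * \<delta>)\<^sup>2"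
  have q1: "q < 1" unfolding q_def using Nd1 dpos
    by (smt (verit) mult_pos_pos of_nat_0_less_iff zero_less_card_finite power2_eq_square mult_left_le_one_le)
  have q0: "q \<ge> 0" unfolding q_def by simp
  have contr: "?H (k + m) \<le> q * ?H k" for k
  proof -
    have "?H (k + m) = Hd (mpow A m ** mpow A k)" by (simp add: mpow_add[symmetric] add.commute)
    also have "\<dots> \<le> q * ?H k" unfolding q_def
      by (rule Hd_mult[OF bistochastic_mpow[OF bA] bistochastic_mpow[OF bA]]) (use dpos dle in auto)
    finally show ?thesis .
  qed
  have dec: "decseq ?H"
  proof (rule decseq_SucI)
    fix k
    have "?H (Suc k) = Hd (A ** mpow A k)" by simp
    also have "\<dots> \<le> (1 - ?N * 0)\<^sup>2 * ?H k"
      by (rule Hd_mult[OF bA bistochastic_mpow[OF bA]]) (use st in \<open>auto simp: stochastic_def\<close>)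
    finally show "?H (Suc k) \<le> ?H k" by simp
  qed
  obtain L where L: "?H \<longlonglongrightarrow> L" "\<forall>i. L \<le> ?H i"
    using decseq_convergent[OF dec, of 0] Hd_nonneg by blast
  have L0: "L \<ge> 0" by (rule LIMSEQ_le_const[OF L(1)]) (auto intro: Hd_nonneg)
  have "L \<le> q * L"
    by (rule LIMSEQ_le[OF LIMSEQ_ignore_initial_segment[OF L(1), of m] tendsto_mult_left[OF L(1)]])
       (use contr in auto)
  then have "L = 0" using L0 q1 q0 by (smt (verit) mult_right_le_one_le mult_le_cancel_right1)
  then show ?thesis using L(1) by simp
qed



lemma sq_mean_le:
  fixes e :: "nat \<Rightarrow> real"
  shows "((\<Sum>k<Suc t. \<bar>e k\<bar>) / real (Suc t))\<^sup>2 \<le> (\<Sum>k<Suc t. (e k)\<^sup>2) / real (Suc t)"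
proof -
  have "(\<Sum>k<Suc t. 1 * \<bar>e k\<bar>)\<^sup>2 \<le> (\<Sum>k<Suc t. (1::real)) * (\<Sum>k<Suc t. 1 * \<bar>e k\<bar>\<^sup>2)"
    by (rule wcs) auto
  then have "(\<Sum>k<Suc t. \<bar>e k\<bar>)\<^sup>2 \<le> real (Suc t) * (\<Sum>k<Suc t. (e k)\<^sup>2)" by simp
  then have h: "(\<Sum>k<Suc t. \<bar>e k\<bar>)\<^sup>2 \<le> real (Suc t) * (\<Sum>k<Suc t. (e k)\<^sup>2)" .
  have "((\<Sum>k<Suc t. \<bar>e k\<bar>) / real (Suc t))\<^sup>2 = (\<Sum>k<Suc t. \<bar>e k\<bar>)\<^sup>2 / (real (Suc t))\<^sup>2"
    by (rule power_divide)
  also have "\<dots> \<le> (real (Suc t) * (\<Sum>k<Suc t. (e k)\<^sup>2)) / (real (Suc t))\<^sup>2"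
    by (rule divide_right_mono[OF h]) simp
  also have "\<dots> = (\<Sum>k<Suc t. (e k)\<^sup>2) / real (Suc t)"
    by (simp only: power2_eq_square) simp
  finally show ?thesis .
qed

lemma bistoch_from_cesaro:
  fixes A :: "real^'n^'n"
  assumes st: "stochastic A"
    and lim: "(\<lambda>t. (\<Sum>k<Suc t. Hd (mpow A k)) / real (Suc t)) \<longlonglongrightarrow> 0"
  shows "bistochastic A"
proof -
  let ?N = "real CARD('n)"
  define Cm where "Cm t = (\<Sum>k<Suc t. Hd (mpow A k)) / real (Suc t)" for t
  define u where "u k l = (\<Sum>i\<in>UNIV. mpow A k $ i $ l)" for k l
  have ub: "0 \<le> u k l \<and> u k l \<le> ?N" for k l
  proof -
    have "u k l \<le> (\<Sum>i\<in>(UNIV::'n set). 1)" unfolding u_def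
      by (rule sum_mono) (rule stoch_le1[OF stochastic_mpow[OF st]])
    moreover have "0 \<le> u k l" unfolding u_def by (intro sum_nonneg mpow_nonneg[OF st])
    ultimately show ?thesis by simp
  qed
  have ue: "(u k l - 1)\<^sup>2 \<le> ?N * Hd (mpow A k)" for k l
  proof -
    have "u k l - 1 = (\<Sum>i\<in>UNIV. 1 * (mpow A k $ i $ l - 1 / ?N))"
      by (simp add: u_def sum_subtractf)
    then have "(u k l - 1)\<^sup>2 \<le> (\<Sum>i\<in>(UNIV::'n set). 1) * (\<Sum>i\<in>UNIV. 1 * (mpow A k $ i $ l - 1 / ?N)\<^sup>2)"
      using wcs[of UNIV "\<lambda>_. 1" "\<lambda>i. mpow A k $ i $ l - 1 / ?N"] by simp
    also have "\<dots> \<le> ?N * Hd (mpow A k)"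
    proof -
      have "(\<Sum>i\<in>UNIV. (mpow A k $ i $ l - 1 / ?N)\<^sup>2) \<le> (\<Sum>i\<in>UNIV. \<Sum>l'\<in>UNIV. (mpow A k $ i $ l' - 1 / ?N)\<^sup>2)"
      proof (rule sum_mono)
        fix i
        show "(mpow A k $ i $ l - 1 / ?N)\<^sup>2 \<le> (\<Sum>l'\<in>UNIV. (mpow A k $ i $ l' - 1 / ?N)\<^sup>2)"
          by (rule member_le_sum[where f = "\<lambda>l'. (mpow A k $ i $ l' - 1 / ?N)\<^sup>2"]) auto
      qed
      then show ?thesis by (simp add: Hd_def)
    qed
    finally show ?thesis .
  qed
  have "(\<Sum>p\<in>UNIV. A $ p $ l) = 1" for l
  proof -
    define W where "W t p = (\<Sum>k<Suc t. u k p) / real (Suc t)" for t p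
    have W1: "(\<lambda>t. W t p) \<longlonglongrightarrow> 1" for p
    proof -
      define Ma where "Ma t = (\<Sum>k<Suc t. \<bar>u k p - 1\<bar>) / real (Suc t)" for t
      have "(\<lambda>t. (Ma t)\<^sup>2) \<longlonglongrightarrow> 0"
      proof (rule Lim_null_comparison)
        show "\<forall>\<^sub>F t in sequentially. norm ((Ma t)\<^sup>2) \<le> ?N * Cm t"
        proof (intro always_eventually allI)
          fix t
          have "norm ((Ma t)\<^sup>2) = (Ma t)\<^sup>2" by simp
          also have "\<dots> \<le> (\<Sum>k<Suc t. (u k p - 1)\<^sup>2) / real (Suc t)"
            unfolding Ma_def by (rule sq_mean_le)
          also have "\<dots> \<le> (\<Sum>k<Suc t. ?N * Hd (mpow A k)) / real (Suc t)"
            by (intro divide_right_mono sum_mono ue) simp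
          also have "\<dots> = ?N * Cm t" by (simp add: Cm_def sum_distrib_left[symmetric] del: sum.lessThan_Suc)
          finally show "norm ((Ma t)\<^sup>2) \<le> ?N * Cm t" .
        qed
        show "(\<lambda>t. ?N * Cm t) \<longlonglongrightarrow> 0" using tendsto_mult_left[OF lim, of ?N] by (simp add: Cm_def)
      qed
      then have "(\<lambda>t. sqrt ((Ma t)\<^sup>2)) \<longlonglongrightarrow> sqrt 0" by (rule tendsto_real_sqrt)
      moreover have "Ma t \<ge> 0" for t unfolding Ma_def by (intro divide_nonneg_nonneg sum_nonneg) auto
      ultimately have Ma0: "Ma \<longlonglongrightarrow> 0" by simp
      have "(\<lambda>t. W t p - 1) \<longlonglongrightarrow> 0"
      proof (rule Lim_null_comparison[OF _ Ma0], intro always_eventually allI)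
        fix t
        have "W t p - 1 = (\<Sum>k<Suc t. u k p - 1) / real (Suc t)"
          by (simp add: W_def sum_subtractf field_simps del: of_nat_Suc)
        then have "norm (W t p - 1) = \<bar>\<Sum>k<Suc t. u k p - 1\<bar> / real (Suc t)" by simp
        also have "\<dots> \<le> Ma t" unfolding Ma_def by (intro divide_right_mono sum_abs) simp
        finally show "norm (W t p - 1) \<le> Ma t" .
      qed
      then show ?thesis using Lim_null[of "\<lambda>t. W t p" 1 sequentially] by simp
    qed
    have usuc: "u (Suc k) l = (\<Sum>p\<in>UNIV. u k p * A $ p $ l)" for k
    proof -
      have "u (Suc k) l = (\<Sum>i\<in>UNIV. \<Sum>p\<in>UNIV. mpow A k $ i $ p * A $ p $ l)"
        by (simp add: u_def mpow_Suc' mm_entry del: mpow.simps)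
      also have "\<dots> = (\<Sum>p\<in>UNIV. \<Sum>i\<in>UNIV. mpow A k $ i $ p * A $ p $ l)" by (rule sum.swap)
      also have "\<dots> = (\<Sum>p\<in>UNIV. u k p * A $ p $ l)" by (simp add: u_def sum_distrib_right)
      finally show ?thesis .
    qed
    have ident: "(\<Sum>p\<in>UNIV. W t p * A $ p $ l) = W t l + (u (Suc t) l - u 0 l) / real (Suc t)" for t
    proof -
      have "(\<Sum>p\<in>UNIV. W t p * A $ p $ l) = (\<Sum>p\<in>UNIV. \<Sum>k<Suc t. u k p * A $ p $ l) / real (Suc t)"
        by (simp add: W_def sum_divide_distrib sum_distrib_right del: sum.lessThan_Suc)
      also have "\<dots> = (\<Sum>k<Suc t. u (Suc k) l) / real (Suc t)"
        by (subst sum.swap) (simp add: usuc)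
      finally have c1: "(\<Sum>p\<in>UNIV. W t p * A $ p $ l) = (\<Sum>k<Suc t. u (Suc k) l) / real (Suc t)" .
      have c2: "(\<Sum>k<Suc t. u (Suc k) l) = (\<Sum>k<Suc t. u k l) + u (Suc t) l - u 0 l"
        using sum.lessThan_Suc_shift[of "\<lambda>k. u k l" "Suc t"] sum.lessThan_Suc[of "\<lambda>k. u k l" "Suc t"] by simp
      show ?thesis unfolding c1 c2 unfolding W_def
        by (simp only: diff_divide_distrib add_divide_distrib)
    qed
    have l1: "(\<lambda>t. \<Sum>p\<in>UNIV. W t p * A $ p $ l) \<longlonglongrightarrow> (\<Sum>p\<in>UNIV. 1 * A $ p $ l)"
      by (intro tendsto_sum tendsto_mult W1 tendsto_const)
    have r0: "(\<lambda>t. (u (Suc t) l - u 0 l) / real (Suc t)) \<longlonglongrightarrow> 0"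
    proof -
      have inv0: "(\<lambda>t. ?N * inverse (real (Suc t))) \<longlonglongrightarrow> 0"
        using tendsto_mult_left[OF LIMSEQ_inverse_real_of_nat, of ?N] by simp
      show ?thesis
    proof (rule Lim_null_comparison[OF _ inv0], intro always_eventually allI)
      fix t
      have "\<bar>u (Suc t) l - u 0 l\<bar> \<le> ?N" using ub[of "Suc t" l] ub[of 0 l] by linarith
      then show "norm ((u (Suc t) l - u 0 l) / real (Suc t)) \<le> ?N * inverse (real (Suc t))"
        by (simp add: divide_inverse abs_mult del: of_nat_Suc)
    qed
    qed
    have l2: "(\<lambda>t. \<Sum>p\<in>UNIV. W t p * A $ p $ l) \<longlonglongrightarrow> 1 + 0"
      unfolding ident by (intro tendsto_add W1 r0)
    show ?thesis using LIMSEQ_unique[OF l1 l2] by simp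
  qed
  then show ?thesis using st by (simp add: bistochastic_def)
qed



lemma Hd_dec: assumes bA: "bistochastic A" shows "Hd (mpow A (Suc k)) \<le> Hd (mpow A k)"
proof -
  have st: "stochastic A" using bA by (simp add: bistochastic_def)
  have "Hd (mpow A (Suc k)) = Hd (A ** mpow A k)" by simp
  also have "\<dots> \<le> (1 - real CARD('a) * 0)\<^sup>2 * Hd (mpow A k)"
    by (rule Hd_mult[OF bA bistochastic_mpow[OF bA]]) (use st in \<open>auto simp: stochastic_def\<close>)
  finally show ?thesis by simp
qed

lemma mat_forward:
  fixes A :: "real^'n^'n"
  assumes st: "stochastic A"
    and lim: "(\<lambda>t. (\<Sum>k<Suc t. Hd (mpow A k)) / real (Suc t)) \<longlonglongrightarrow> 0"
  shows "irreducible_mat A \<and> aperiodic_mat A \<and> bistochastic A"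
proof -
  let ?N = "real CARD('n)"
  let ?H = "\<lambda>k. Hd (mpow A k)"
  have bA: "bistochastic A" by (rule bistoch_from_cesaro[OF st lim])
  have dec: "decseq ?H" by (rule decseq_SucI) (rule Hd_dec[OF bA])
  have H0: "?H \<longlonglongrightarrow> 0"
  proof (rule Lim_null_comparison[OF _ lim], intro always_eventually allI)
    fix t
    have "(\<Sum>k<Suc t. ?H t) \<le> (\<Sum>k<Suc t. ?H k)"
      by (rule sum_mono) (use decseqD[OF dec] in auto)
    then have "real (Suc t) * ?H t \<le> (\<Sum>k<Suc t. ?H k)" by simp
    then have "?H t \<le> (\<Sum>k<Suc t. ?H k) / real (Suc t)"
      by (simp add: field_simps del: of_nat_Suc sum.lessThan_Suc)
    then show "norm (?H t) \<le> (\<Sum>k<Suc t. ?H k) / real (Suc t)"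
      using Hd_nonneg[of "mpow A t"] by (simp only: real_norm_def abs_of_nonneg)
  qed
  have Npos: "?N > 0" by simp
  obtain K where K: "\<And>k. k \<ge> K \<Longrightarrow> norm (?H k - 0) < 1 / ?N\<^sup>2"
    using LIMSEQ_D[OF H0, of "1 / ?N\<^sup>2"] Npos by auto
  have pos: "mpow A k $ i $ l > 0" if k: "k \<ge> K" for k i l
  proof (rule ccontr)
    assume "\<not> mpow A k $ i $ l > 0"
    then have x: "mpow A k $ i $ l \<le> 0" by simp
    have "(1 / ?N)\<^sup>2 \<le> (mpow A k $ i $ l - 1 / ?N)\<^sup>2"
    proof -
      have "1 / ?N \<le> 1 / ?N - mpow A k $ i $ l" using x by simp
      then have "(1 / ?N)\<^sup>2 \<le> (1 / ?N - mpow A k $ i $ l)\<^sup>2" by (rule power_mono) (use Npos in simp)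
      then show ?thesis by (simp add: power2_commute)
    qed
    also have "\<dots> \<le> (\<Sum>l'\<in>UNIV. (mpow A k $ i $ l' - 1 / ?N)\<^sup>2)"
      by (rule member_le_sum[where f = "\<lambda>l'. (mpow A k $ i $ l' - 1 / ?N)\<^sup>2"]) auto
    also have "\<dots> \<le> ?H k" unfolding Hd_def
      by (rule member_le_sum[where f = "\<lambda>i. \<Sum>l'\<in>UNIV. (mpow A k $ i $ l' - 1 / ?N)\<^sup>2"]) (auto intro: sum_nonneg)
    finally have "(1 / ?N)\<^sup>2 \<le> ?H k" .
    moreover have "?H k < 1 / ?N\<^sup>2" using K[OF k] Hd_nonneg by simp
    ultimately show False by (simp add: power_divide)
  qed
  have irr: "irreducible_mat A"
    unfolding irreducible_mat_def using pos[of K] by (metis less_irrefl order_refl)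
  have ap: "aperiodic_mat A"
    unfolding aperiodic_mat_def period_at_def
  proof
    fix i
    let ?G = "Gcd {k. k \<ge> 1 \<and> mpow A k $ i $ i > 0}"
    have "?G dvd Suc K" by (rule Gcd_dvd) (use pos[of "Suc K"] in auto)
    moreover have "?G dvd Suc (Suc K)" by (rule Gcd_dvd) (use pos[of "Suc (Suc K)"] in auto)
    ultimately have "?G dvd (Suc (Suc K) - Suc K)" by (rule dvd_diff_nat[rotated])
    then show "?G = 1" by simp
  qed
  show ?thesis using irr ap bA by simp
qed

lemma mat_iff:
  fixes A :: "real^'n^'n"
  assumes st: "stochastic A"
  shows "((\<lambda>t. (\<Sum>k<Suc t. Hd (mpow A k)) / real (Suc t)) \<longlonglongrightarrow> 0) \<longleftrightarrow>
         irreducible_mat A \<and> aperiodic_mat A \<and> bistochastic A"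
proof
  assume "(\<lambda>t. (\<Sum>k<Suc t. Hd (mpow A k)) / real (Suc t)) \<longlonglongrightarrow> 0"
  then show "irreducible_mat A \<and> aperiodic_mat A \<and> bistochastic A" by (rule mat_forward[OF st])
next
  assume "irreducible_mat A \<and> aperiodic_mat A \<and> bistochastic A"
  then have "(\<lambda>k. Hd (mpow A k)) \<longlonglongrightarrow> 0" using Hd_tendsto0 by blast
  then show "(\<lambda>t. (\<Sum>k<Suc t. Hd (mpow A k)) / real (Suc t)) \<longlonglongrightarrow> 0"
    by (rule cesaro_nonneg[OF Hd_nonneg])
qed

theorem theorem1:
  fixes M :: "'a measure" and A :: "real^'n^'n"
    and X :: "'n \<Rightarrow> nat \<Rightarrow> 'a \<Rightarrow> real" and D :: "real measure"
    and \<theta> \<sigma>2 :: real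
  assumes "prob_space M"
    and "CARD('n) \<ge> 2"
    and "\<And>i t. t \<ge> 1 \<Longrightarrow> X i t \<in> borel_measurable M"
    and "prob_space.indep_vars M (\<lambda>_. borel) (\<lambda>(i, t). X i t) (UNIV \<times> {1..})"
    and "\<And>i t. t \<ge> 1 \<Longrightarrow> distr M borel (X i t) = D"
    and "integrable D (\<lambda>x. x\<^sup>2)"
    and "\<theta> = (\<integral>x. x \<partial>D)"
    and "\<sigma>2 = (\<integral>x. (x - \<theta>)\<^sup>2 \<partial>D)"
    and "\<sigma>2 > 0"
    and "stochastic A"
  shows "(perf_ratio M A X \<theta> \<longlonglongrightarrow> 1) \<longleftrightarrow>
           irreducible_mat A \<and> aperiodic_mat A \<and> bistochastic A"
proof -
  note mom = moments[OF assms(1) assms(3) assms(4) assms(5) assms(6) assms(7) assms(8)]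
  interpret prob_space M by fact
  define Z where "Z = (\<lambda>(j, k) \<omega>. X j (Suc k) \<omega> - \<theta>)"
  have Zint: "integrable M (\<lambda>\<omega>. Z p \<omega> * Z q \<omega>)" for p q
    using mom(1)[of "(fst p, Suc (snd p))" "(fst q, Suc (snd q))"] by (auto simp: Z_def split: prod.splits)
  have Zvar: "(\<integral>\<omega>. Z p \<omega> * Z p \<omega> \<partial>M) = \<sigma>2" for p
    using mom(2)[of "(fst p, Suc (snd p))"] by (auto simp: Z_def split: prod.splits)
  have Zcov: "(\<integral>\<omega>. Z p \<omega> * Z q \<omega> \<partial>M) = 0" if "p \<noteq> q" for p q
  proof -
    obtain j k j' k' where pq: "p = (j, k)" "q = (j', k')" by (cases p, cases q) auto
    have "(j, Suc k) \<noteq> (j', Suc k')" using that pq by simp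
    then show ?thesis using mom(3)[of "(j, Suc k)" "(j', Suc k')"] pq by (simp add: Z_def)
  qed
  have Zdef: "Z (j, k) \<omega> = X j (Suc k) \<omega> - \<theta>" for j k \<omega> by (simp add: Z_def)
  define Cm where "Cm t = (\<Sum>k<Suc t. Hd (mpow A k)) / real (Suc t)" for t
  have Cm0: "Cm t \<ge> 0" for t unfolding Cm_def by (intro divide_nonneg_nonneg sum_nonneg Hd_nonneg) simp
  have pr: "perf_ratio M A X \<theta> (Suc t) = inverse (1 + Cm t)" for t
  proof -
    let ?n = "real (Suc t)"
    let ?S = "\<Sum>k<Suc t. Fr (mpow A k)"
    have S: "?S = ?n + ?n * Cm t"
    proof -
      have "?S = (\<Sum>k<Suc t. 1 + Hd (mpow A k))"
        by (intro sum.cong refl) (simp add: Hd_eq[OF stochastic_mpow[OF assms(10)]])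
      also have "\<dots> = ?n + ?n * Cm t" by (simp add: sum.distrib Cm_def del: of_nat_Suc sum.lessThan_Suc)
      finally show ?thesis .
    qed
    have "perf_ratio M A X \<theta> (Suc t) = (\<sigma>2 / ?n) / (\<sigma>2 / ?n\<^sup>2 * ?S)"
    proof -
      have e1: "(\<integral>\<omega>. (norm ((grand_mean X (Suc t) \<omega> - \<theta>) *\<^sub>R (1::real^'n)))\<^sup>2 \<partial>M) = \<sigma>2 / real (Suc t)"
        by (rule expect_mean[where Z=Z, OF Zint Zvar Zcov Zdef])
      have e2: "(\<integral>\<omega>. (norm (theta_hat A X (Suc t) \<omega> - \<theta> *\<^sub>R 1))\<^sup>2 \<partial>M)
          = \<sigma>2 / (real (Suc t))\<^sup>2 * (\<Sum>k<Suc t. Fr (mpow A k))"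
        by (rule expect_theta[where Z=Z, OF Zint Zvar Zcov Zdef assms(10)])
      show ?thesis unfolding perf_ratio_def e1 e2 ..
    qed
    also have "\<dots> = inverse (1 + Cm t)"
    proof -
      have p1: "\<sigma>2 * ?n > 0" using assms(9) by simp
      have p2: "\<sigma>2 * (Cm t * ?n) \<ge> 0" using assms(9) Cm0[of t] by simp
      have "\<sigma>2 * ?n + \<sigma>2 * (Cm t * ?n) \<noteq> 0" using p1 p2 by linarith
      then show ?thesis unfolding S using assms(9) Cm0[of t]
        by (simp add: field_simps power2_eq_square del: of_nat_Suc)
    qed
    finally show ?thesis .
  qed
  have "(perf_ratio M A X \<theta> \<longlonglongrightarrow> 1) \<longleftrightarrow> ((\<lambda>t. perf_ratio M A X \<theta> (Suc t)) \<longlonglongrightarrow> 1)"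
    using LIMSEQ_Suc LIMSEQ_imp_Suc by blast
  also have "\<dots> \<longleftrightarrow> ((\<lambda>t. inverse (1 + Cm t)) \<longlonglongrightarrow> 1)" by (simp only: pr)
  also have "\<dots> \<longleftrightarrow> (Cm \<longlonglongrightarrow> 0)"
  proof
    assume h: "(\<lambda>t. inverse (1 + Cm t)) \<longlonglongrightarrow> 1"
    have "(\<lambda>t. inverse (inverse (1 + Cm t))) \<longlonglongrightarrow> inverse 1"
      by (rule tendsto_inverse[OF h]) simp
    then have "(\<lambda>t. 1 + Cm t) \<longlonglongrightarrow> 1 + 0" by simp
    then show "Cm \<longlonglongrightarrow> 0" by (simp only: tendsto_add_const_iff)
  next
    assume h: "Cm \<longlonglongrightarrow> 0"
    have "(\<lambda>t. 1 + Cm t) \<longlonglongrightarrow> 1 + 0" by (intro tendsto_add tendsto_const h)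
    then have "(\<lambda>t. inverse (1 + Cm t)) \<longlonglongrightarrow> inverse (1 + 0)" by (rule tendsto_inverse) simp
    then show "(\<lambda>t. inverse (1 + Cm t)) \<longlonglongrightarrow> 1" by simp
  qed
  also have "\<dots> \<longleftrightarrow> irreducible_mat A \<and> aperiodic_mat A \<and> bistochastic A"
    unfolding Cm_def by (rule mat_iff[OF assms(10)])
  finally show ?thesis .
qed

end
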